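(* Let $\mathcal{H}$ be a finite set of hypotheses, $\mathcal{R}$ a finite collection of decision regions $r\subseteq\mathcal{H}$, and $\mathcal{G}$ the set of subregions. Let $k_{\mathrm{as}}=m+1$, where $m$ is the largest cardinality of a set $R\subseteq\mathcal{R}$ such that (1) some hypothesis $\tilde h$ lies in every region of $R$, and (2) for every $r\in R$ there is a hypothesis $h$ with $h\notin r$ and $h\in r'$ for all $r'\in R\setminus\{r\}$. Then $\max_{r\in\mathcal{R}}|\{g\in\mathcal{G}: g\subseteq r\}|+1\ge k_{\mathrm{as}}$.
   Context: Subregions: hypotheses are grouped into the same subregion iff they belong to exactly the same decision regions; $\mathcal{G}$ is the set of these classes, and $g\subseteq r$ means every hypothesis of $g$ lies in $r$. *)

theory Defs
  imports Main
begin

definition subregions :: "'h set \<Rightarrow> 'h set set \<Rightarrow> 'h set set" where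
  "subregions H R = H // {(h, h'). h \<in> H \<and> h' \<in> H \<and> (\<forall>r\<in>R. h \<in> r \<longleftrightarrow> h' \<in> r)}"

definition as_admissible :: "'h set \<Rightarrow> 'h set set \<Rightarrow> 'h set set \<Rightarrow> bool" where
  "as_admissible H R S \<longleftrightarrow> S \<subseteq> R \<and>
     (\<exists>ht\<in>H. \<forall>r\<in>S. ht \<in> r) \<and>
     (\<forall>r\<in>S. \<exists>h\<in>H. h \<notin> r \<and> (\<forall>r'\<in>S - {r}. h \<in> r'))"

definition k_as :: "'h set \<Rightarrow> 'h set set \<Rightarrow> nat" where
  "k_as H R = Max {card S | S. as_admissible H R S} + 1"

end

theory Submission
  imports Defs
begin

lemma adm_bound:
  fixes H :: "'h set" and R :: "'h set set"
  assumes fH: "finite H" and fR: "finite R" and sub: "\<forall>r\<in>R. r \<subseteq> H"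
    and adm: "as_admissible H R S" and ne: "S \<noteq> {}"
  shows "\<exists>r\<in>R. card S \<le> card {g \<in> subregions H R. g \<subseteq> r}"
proof -
  define E where "E = {(h, h'). h \<in> H \<and> h' \<in> H \<and> (\<forall>r\<in>R. h \<in> r \<longleftrightarrow> h' \<in> r)}"
  have SR: "S \<subseteq> R" using adm unfolding as_admissible_def by blast
  obtain ht where ht: "ht \<in> H" "\<forall>r\<in>S. ht \<in> r" using adm unfolding as_admissible_def by blast
  have "\<forall>r\<in>S. \<exists>h. h \<in> H \<and> h \<notin> r \<and> (\<forall>r'\<in>S - {r}. h \<in> r')"
    using adm unfolding as_admissible_def by blast
  then obtain w where w: "\<And>r. r \<in> S \<Longrightarrow> w r \<in> H \<and> w r \<notin> r \<and> (\<forall>r'\<in>S - {r}. w r \<in> r')"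
    by metis
  obtain r0 where r0: "r0 \<in> S" using ne by blast
  define f where "f r = (if r = r0 then E``{ht} else E``{w r})" for r
  have cls: "E``{a} \<in> subregions H R" if "a \<in> H" for a
    using that unfolding subregions_def E_def[symmetric] by (rule quotientI)
  have eqD: "\<forall>r\<in>R. a \<in> r \<longleftrightarrow> b \<in> r" if "a \<in> H" "b \<in> H" "E``{a} = E``{b}" for a b
  proof -
    have "b \<in> E``{b}" using that(2) unfolding E_def by auto
    hence "b \<in> E``{a}" using that(3) by simp
    hence "(a,b) \<in> E" by (simp only: Image_singleton_iff)
    thus ?thesis unfolding E_def by auto
  qed
  have subr: "E``{a} \<subseteq> r0" if "a \<in> r0" for a
    using that r0 SR unfolding E_def by auto
  have fin: "finite {g \<in> subregions H R. g \<subseteq> r0}"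
  proof -
    have "subregions H R \<subseteq> Pow H" unfolding subregions_def quotient_def E_def by auto
    hence "finite (subregions H R)" using fH by (rule finite_subset[OF _ finite_Pow_iff[THEN iffD2]])
    thus ?thesis by simp
  qed
  have inj: "inj_on f S"
  proof (rule inj_onI)
    fix x y assume x: "x \<in> S" and y: "y \<in> S" and fxy: "f x = f y"
    show "x = y"
    proof (rule ccontr)
      assume xy: "x \<noteq> y"
      show False
      proof (cases "x = r0")
        case True
        hence yn: "y \<noteq> r0" using xy by simp
        have "E``{ht} = E``{w y}" using fxy True yn unfolding f_def by simp
        hence "\<forall>r\<in>R. ht \<in> r \<longleftrightarrow> w y \<in> r" using eqD[of ht "w y"] ht w[OF y] by blast
        thus False using ht w[OF y] y SR by blast
      next
        case False
        note xn = False
        show False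
        proof (cases "y = r0")
          case True
          have "E``{ht} = E``{w x}" using fxy True xn unfolding f_def by simp
          hence "\<forall>r\<in>R. ht \<in> r \<longleftrightarrow> w x \<in> r" using eqD[of ht "w x"] ht w[OF x] by blast
          thus False using ht w[OF x] x SR by blast
        next
          case False
          have "E``{w x} = E``{w y}" using fxy False xn unfolding f_def by simp
          hence "\<forall>r\<in>R. w x \<in> r \<longleftrightarrow> w y \<in> r" using eqD[of "w x" "w y"] w[OF x] w[OF y] by blast
          hence "w x \<in> x \<longleftrightarrow> w y \<in> x" using x SR by blast
          moreover have "w y \<in> x" using w[OF y] x xy by blast
          ultimately show False using w[OF x] by blast
        qed
      qed
    qed
  qed
  have img: "f ` S \<subseteq> {g \<in> subregions H R. g \<subseteq> r0}"
  proof
    fix g assume "g \<in> f ` S"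
    then obtain r where r: "r \<in> S" "g = f r" by blast
    show "g \<in> {g \<in> subregions H R. g \<subseteq> r0}"
    proof (cases "r = r0")
      case True
      thus ?thesis using r cls ht subr r0 unfolding f_def by auto
    next
      case False
      have "w r \<in> r0" using w[OF r(1)] r0 False by blast
      thus ?thesis using r cls w[OF r(1)] subr False unfolding f_def by auto
    qed
  qed
  have "card S \<le> card {g \<in> subregions H R. g \<subseteq> r0}"
    using card_inj_on_le[OF inj img fin] .
  thus ?thesis using r0 SR by blast
qed

theorem proposition4:
  fixes H :: "'h set" and R :: "'h set set"
  assumes "finite H" and "finite R" and "\<forall>r\<in>R. r \<subseteq> H"
    and "H \<noteq> {}" and "R \<noteq> {}"
  shows "Max ((\<lambda>r. card {g \<in> subregions H R. g \<subseteq> r}) ` R) + 1 \<ge> k_as H R"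
proof -
  let ?A = "{card S | S. as_admissible H R S}"
  have "?A \<subseteq> card ` Pow R" unfolding as_admissible_def by blast
  hence finA: "finite ?A" using assms(2) by (meson finite_Pow_iff finite_imageI finite_subset)
  have "as_admissible H R {}" using assms(4) unfolding as_admissible_def by auto
  hence neA: "?A \<noteq> {}" by blast
  have "Max ?A \<in> ?A" using Max_in[OF finA neA] .
  then obtain S where S: "as_admissible H R S" "Max ?A = card S" by auto
  have fM: "finite ((\<lambda>r. card {g \<in> subregions H R. g \<subseteq> r}) ` R)" using assms(2) by simp
  have "card S \<le> Max ((\<lambda>r. card {g \<in> subregions H R. g \<subseteq> r}) ` R)"
  proof (cases "S = {}")
    case True thus ?thesis by simp
  next
    case False
    then obtain r where "r \<in> R" "card S \<le> card {g \<in> subregions H R. g \<subseteq> r}"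
      using adm_bound[OF assms(1,2,3) S(1)] by blast
    thus ?thesis using Max_ge[OF fM] by (meson imageI le_trans)
  qed
  thus ?thesis unfolding k_as_def using S(2) by simp
qed

end
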